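(* Let $X$ be a Gorenstein fake weighted projective space with weights $(\lambda_0,\ldots,\lambda_n)$ having at worst canonical singularities, and let $h:=\sum_{i=0}^n\lambda_i$. Then $h\leq t_n$, where $t_n:=y_n-1$ and $(y_k)$ is the Sylvester sequence $y_0:=2$, $y_k:=1+y_0y_1\cdots y_{k-1}$ for $k\ge1$.
   Context: Let $N\cong\mathbb{Z}^n$ be a lattice and $N_\mathbb{R}:=N\otimes_\mathbb{Z}\mathbb{R}$. Let $\rho_0,\ldots,\rho_n\in N$ be primitive lattice points with $N_\mathbb{R}=\sum_{i=0}^n\mathbb{R}_{\geq0}\rho_i$. There are positive integers $\lambda_0,\ldots,\lambda_n$ with $\gcd\{\lambda_0,\ldots,\lambda_n\}=1$, unique up to order, such that $\sum_{i=0}^n\lambda_i\rho_i=0$. The cones $\sigma_i$ generated by $\{\rho_j: j\neq i\}$ generate a complete simplicial fan; the associated projective toric variety $X$ is called a fake weighted projective space with weights $(\lambda_0,\ldots,\lambda_n)$. *)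

theory Defs
  imports "HOL-Analysis.Analysis"
begin

text \<open>The lattice N is int^'n, with n = CARD('n); N_R is real^'n.\<close>

definition lat_to_real :: "int^'n \<Rightarrow> real^'n" where
  "lat_to_real v = (\<chi> k. real_of_int (v $ k))"

definition lat_pair :: "int^'n \<Rightarrow> int^'n \<Rightarrow> int" where
  "lat_pair u v = (\<Sum>k\<in>UNIV. u $ k * v $ k)"

definition primitive_lattice_point :: "int^'n \<Rightarrow> bool" where
  "primitive_lattice_point v \<longleftrightarrow> v \<noteq> 0 \<and>
     (\<forall>(k::int) (w::int^'n). v = k *s w \<longrightarrow> \<bar>k\<bar> = 1)"

definition positively_spanning :: "(nat \<Rightarrow> int^'n) \<Rightarrow> bool" where
  "positively_spanning \<rho> \<longleftrightarrow>
     (\<forall>x::real^'n. \<exists>c::nat \<Rightarrow> real. (\<forall>i. c i \<ge> 0) \<and>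
        x = (\<Sum>i\<in>{0..CARD('n)}. c i *\<^sub>R lat_to_real (\<rho> i)))"

definition are_weights :: "(nat \<Rightarrow> int^'n) \<Rightarrow> (nat \<Rightarrow> nat) \<Rightarrow> bool" where
  "are_weights \<rho> wt \<longleftrightarrow>
     (\<forall>i\<in>{0..CARD('n)}. wt i > 0) \<and>
     Gcd (wt ` {0..CARD('n)}) = 1 \<and>
     (\<Sum>i\<in>{0..CARD('n)}. int (wt i) *s \<rho> i) = 0"

definition fake_wps_data :: "(nat \<Rightarrow> int^'n) \<Rightarrow> bool" where
  "fake_wps_data \<rho> \<longleftrightarrow>
     (\<forall>i\<in>{0..CARD('n)}. primitive_lattice_point (\<rho> i)) \<and> positively_spanning \<rho>"

text \<open>Gorenstein: for every maximal cone sigma_i = cone(rho_j : j \<noteq> i) there is a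
  lattice point u_i of the dual lattice M with <u_i, rho_j> = 1 for all j \<noteq> i.\<close>
definition fwps_gorenstein :: "(nat \<Rightarrow> int^'n) \<Rightarrow> bool" where
  "fwps_gorenstein \<rho> \<longleftrightarrow>
     (\<forall>i\<in>{0..CARD('n)}. \<exists>u::int^'n.
        \<forall>j\<in>{0..CARD('n)} - {i}. lat_pair u (\<rho> j) = 1)"

text \<open>At worst canonical singularities (toric criterion for simplicial cones): every
  nonzero lattice point x of sigma_i satisfies u_i(x) \<ge> 1, where u_i is the (rational)
  linear form equal to 1 on the rays of sigma_i; writing x = sum_{j\<noteq>i} c_j rho_j,
  u_i(x) = sum c_j.\<close>
definition fwps_canonical :: "(nat \<Rightarrow> int^'n) \<Rightarrow> bool" where
  "fwps_canonical \<rho> \<longleftrightarrow>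
     (\<forall>i\<in>{0..CARD('n)}. \<forall>(x::int^'n) (c::nat \<Rightarrow> real).
        x \<noteq> 0 \<longrightarrow> (\<forall>j. c j \<ge> 0) \<longrightarrow>
        lat_to_real x = (\<Sum>j\<in>{0..CARD('n)} - {i}. c j *\<^sub>R lat_to_real (\<rho> j)) \<longrightarrow>
        (\<Sum>j\<in>{0..CARD('n)} - {i}. c j) \<ge> 1)"

text \<open>Sylvester sequence: y_0 = 2, y_k = 1 + y_0 ... y_{k-1}. Defined via the
  running product P k = y_0 ... y_{k-1}.\<close>
fun sylv_prod :: "nat \<Rightarrow> nat" where
  "sylv_prod 0 = 1"
| "sylv_prod (Suc k) = sylv_prod k * (1 + sylv_prod k)"

definition sylvester :: "nat \<Rightarrow> nat" where
  "sylvester k = 1 + sylv_prod k"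

lemma sylv_prod_eq: "sylv_prod k = (\<Prod>j<k. sylvester j)"
  by (induction k) (simp_all add: sylvester_def)

lemma sylvester_0: "sylvester 0 = 2"
  by (simp add: sylvester_def)

lemma sylvester_rec: "sylvester k = 1 + (\<Prod>j<k. sylvester j)"
  unfolding sylvester_def[of k] sylv_prod_eq by (rule refl)

end

theory Submission
  imports Defs
begin

definition Gf :: "real \<Rightarrow> real" where "Gf c = c^2/(1+c)"

definition phi :: "nat \<Rightarrow> real \<Rightarrow> real \<Rightarrow> real" where
  "phi m A E = (if m \<le> 1 then A*E else ((Gf ^^ (m-2)) (A*E/(1+A)))^2)"

lemma Gf_pos: "c > 0 \<Longrightarrow> Gf c > 0"
  unfolding Gf_def by simp

lemma Gf_mono: "0 < a \<Longrightarrow> a \<le> b \<Longrightarrow> Gf a \<le> Gf b"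
proof -
  assume a: "0 < a" "a \<le> b"
  have "a^2 * (1+b) \<le> b^2 * (1+a)"
  proof -
    have "a^2 \<le> b^2" using a by (simp add: power_mono)
    moreover have "a^2*b \<le> b^2*a" using a by (simp add: power2_eq_square mult_left_mono)
    ultimately show ?thesis by (simp add: algebra_simps)
  qed
  thus ?thesis using a unfolding Gf_def by (simp add: divide_simps)
qed

lemma iter_pos: "c > 0 \<Longrightarrow> (Gf ^^ j) c > 0"
  by (induction j) (auto simp: Gf_pos)

lemma iter_mono: "0 < a \<Longrightarrow> a \<le> b \<Longrightarrow> (Gf ^^ j) a \<le> (Gf ^^ j) b"
  by (induction j) (auto intro: Gf_mono iter_pos)

lemma phi_mono:
  assumes "0 < c" "c \<le> A" "c \<le> E"
  shows "phi j c c \<le> phi j A E"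
proof (cases "j \<le> 1")
  case True
  thus ?thesis using assms unfolding phi_def by (simp add: mult_mono)
next
  case False
  have A: "0 < A" using assms by simp
  have "c*c/(1+c) \<le> A*E/(1+A)"
  proof -
    have "c/(1+c) \<le> A/(1+A)" using assms by (simp add: divide_simps algebra_simps)
    moreover have "0 \<le> c/(1+c)" using assms by simp
    ultimately have "c/(1+c) * c \<le> A/(1+A) * E" using assms
      by (meson mult_mono less_imp_le order_trans)
    thus ?thesis by simp
  qed
  hence "(Gf ^^ (j-2)) (c*c/(1+c)) \<le> (Gf ^^ (j-2)) (A*E/(1+A))"
    using assms by (intro iter_mono) auto
  moreover have "0 < (Gf ^^ (j-2)) (c*c/(1+c))" using assms by (intro iter_pos) auto
  ultimately show ?thesis using False unfolding phi_def
    by (simp add: power_mono)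
qed

lemma phi_shift:
  assumes "1 \<le> k" "k < m"
  shows "phi (m-k) ((Gf^^(k-1)) (A*E/(1+A))) ((Gf^^(k-1)) (A*E/(1+A))) = phi m A E"
proof -
  define d where "d = (Gf^^(k-1)) (A*E/(1+A))"
  show ?thesis
  proof (cases "m - k = 1")
    case True
    hence "m - 2 = k - 1" using assms by simp
    thus ?thesis using True assms unfolding phi_def d_def
      by (simp add: power2_eq_square)
  next
    case False
    have "d*d/(1+d) = Gf d" unfolding Gf_def by (simp add: power2_eq_square)
    have "(Gf ^^ (m-k-2)) (Gf d) = (Gf ^^ (m-2)) (A*E/(1+A))"
    proof -
      have "(Gf ^^ (m-k-2)) (Gf d) = (Gf ^^ (Suc (m-k-2))) d"
        by (simp add: funpow_Suc_right del: funpow.simps)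
      also have "\<dots> = (Gf ^^ (Suc (m-k-2)) \<circ> Gf^^(k-1)) (A*E/(1+A))" by (simp add: d_def)
      also have "\<dots> = (Gf ^^ (Suc (m-k-2) + (k-1))) (A*E/(1+A))" by (simp add: funpow_add)
      also have "Suc (m-k-2) + (k-1) = m - 2" using False assms by simp
      finally show ?thesis .
    qed
    moreover have "\<not> m - k \<le> 1" "\<not> m \<le> 1" using False assms by auto
    ultimately show ?thesis using \<open>d*d/(1+d) = Gf d\<close> unfolding phi_def d_def[symmetric]
      by simp
  qed
qed

lemma abel_ineq:
  fixes x d :: "nat \<Rightarrow> real"
  assumes desc: "\<forall>i. Suc i < m \<longrightarrow> x (Suc i) \<le> x i"
    and D: "\<forall>k. 1 \<le> k \<longrightarrow> k < m \<longrightarrow> 0 \<le> sum d {..<k}"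
    and m: "m \<ge> 1"
  shows "x (m-1) * sum d {..<m} \<le> (\<Sum>i<m. x i * d i)"
  using desc D m
proof (induction m)
  case 0
  then show ?case by simp
next
  case (Suc m)
  show ?case
  proof (cases "m = 0")
    case True
    then show ?thesis by simp
  next
    case False
    have IH: "x (m-1) * sum d {..<m} \<le> (\<Sum>i<m. x i * d i)"
      using Suc.prems False by (intro Suc.IH) auto
    have D0: "0 \<le> sum d {..<m}" using Suc.prems False by auto
    have xm: "x m \<le> x (m-1)" using Suc.prems(1) False
      by (metis Suc_pred' lessI not_gr_zero)
    have "x m * sum d {..<Suc m} = x m * sum d {..<m} + x m * d m" by (simp add: algebra_simps)
    also have "\<dots> \<le> x (m-1) * sum d {..<m} + x m * d m"
      using xm D0 by (simp add: mult_right_mono)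
    also have "\<dots> \<le> (\<Sum>i<m. x i * d i) + x m * d m" using IH by simp
    also have "\<dots> = (\<Sum>i<Suc m. x i * d i)" by simp
    finally show ?thesis by simp
  qed
qed

lemma ml_lemma:
  fixes x y :: "nat \<Rightarrow> real"
  assumes xpos: "\<forall>i<m. 0 < x i" and ypos: "\<forall>i<m. 0 < y i"
    and desc: "\<forall>i. Suc i < m \<longrightarrow> x (Suc i) \<le> x i"
    and pre: "\<forall>k. 1 \<le> k \<longrightarrow> k < m \<longrightarrow> prod x {..<k} \<le> prod y {..<k}"
    and strict: "prod x {..<m} < prod y {..<m}"
    and m: "m \<ge> 1"
  shows "sum x {..<m} < sum y {..<m}"
proof -
  define d where "d i = ln (y i / x i)" for i
  have Dk: "sum d {..<k} = ln (prod y {..<k} / prod x {..<k})" if "k \<le> m" for k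
  proof -
    have "sum d {..<k} = ln (\<Prod>i<k. y i / x i)"
      proof -
      have "\<forall>i\<in>{..<k}. y i / x i \<noteq> 0" proof
        fix i assume "i \<in> {..<k}"
        hence "i < m" using that by auto
        thus "y i / x i \<noteq> 0" using xpos ypos by (metis divide_eq_0_iff less_irrefl)
      qed
      thus ?thesis unfolding d_def by (subst ln_prod) auto
    qed
    also have "(\<Prod>i<k. y i / x i) = prod y {..<k} / prod x {..<k}"
      by (simp add: prod_dividef)
    finally show ?thesis .
  qed
  have px: "0 < prod x {..<k}" if "k \<le> m" for k using xpos that by (intro prod_pos) auto
  have D: "\<forall>k. 1 \<le> k \<longrightarrow> k < m \<longrightarrow> 0 \<le> sum d {..<k}"
  proof (intro allI impI)
    fix k assume k: "1 \<le> k" "k < m"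
    have "1 \<le> prod y {..<k} / prod x {..<k}" using pre k px[of k] by simp
    thus "0 \<le> sum d {..<k}" using Dk[of k] k by simp
  qed
  have Dm: "0 < sum d {..<m}"
  proof -
    have "1 < prod y {..<m} / prod x {..<m}" using strict px[of m] by simp
    thus ?thesis using Dk[of m] by (simp add: ln_gt_zero)
  qed
  have "0 < x (m-1) * sum d {..<m}" using Dm xpos m by simp
  also have "\<dots> \<le> (\<Sum>i<m. x i * d i)" using abel_ineq[OF desc D m] .
  also have "\<dots> \<le> (\<Sum>i<m. y i - x i)"
  proof (rule sum_mono)
    fix i assume i: "i \<in> {..<m}"
    have "ln (y i / x i) \<le> y i / x i - 1" using xpos ypos i by (intro ln_le_minus_one) auto
    hence "x i * ln (y i / x i) \<le> x i * (y i / x i - 1)" using xpos i by (simp add: mult_left_mono)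
    also have "\<dots> = y i - x i" using xpos i by (simp add: algebra_simps) (metis less_irrefl lessThan_iff)
    finally show "x i * d i \<le> y i - x i" by (simp add: d_def)
  qed
  also have "\<dots> = sum y {..<m} - sum x {..<m}" by (simp add: sum_subtractf)
  finally show ?thesis by simp
qed

lemma main_real:
  fixes x :: "nat \<Rightarrow> real"
  assumes "m \<ge> 1" "A > 0" "\<forall>i<m. 0 < x i" "\<forall>i. Suc i < m \<longrightarrow> x (Suc i) \<le> x i"
   "\<forall>k<m. A * prod x {..<k} \<le> sum x {k..<m}"
  shows "phi m A (sum x {..<m}) \<le> A * prod x {..<m}"
  using assms
proof (induction m arbitrary: x A rule: less_induct)
  case (less m)
  note m1 = less.prems(1) and Apos = less.prems(2) and xpos = less.prems(3)
    and desc = less.prems(4) and cons = less.prems(5)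
  define E where "E = sum x {..<m}"
  define \<psi> where "\<psi> = A*E/(1+A)"
  define d where "d k = (Gf^^(k-1)) \<psi>" for k
  have Epos: "E > 0" unfolding E_def using xpos m1 by (intro sum_pos) (auto simp: lessThan_empty_iff)
  have psipos: "\<psi> > 0" unfolding \<psi>_def using Epos Apos by simp
  have dpos: "d k > 0" for k unfolding d_def using psipos by (rule iter_pos)
  show ?case
  proof (cases "m = 1")
    case True
    thus ?thesis unfolding phi_def by simp
  next
    case False
    hence m2: "m \<ge> 2" using m1 by simp
    show ?thesis
    proof (cases "\<exists>k. 1 \<le> k \<and> k < m \<and> d k \<le> A * prod x {..<k}")
      case True
      then obtain k where k: "1 \<le> k" "k < m" "d k \<le> A * prod x {..<k}" by blast
      define x' where "x' i = x (i + k)" for i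
      define A' where "A' = A * prod x {..<k}"
      have sumsh: "sum x {j+k..<m} = sum x' {j..<m-k}" for j
        unfolding x'_def using k sum.shift_bounds_nat_ivl[of x j k "m-k"] by simp
      have prodsh: "prod x {k..<j+k} = prod x' {..<j}" for j
        unfolding x'_def using prod.shift_bounds_nat_ivl[of x 0 k j] by (simp add: atLeast0LessThan)
      have prodsplit: "prod x {..<j} = prod x {..<k} * prod x {k..<j}" if "k \<le> j" for j
        using prod.atLeastLessThan_concat[of 0 k j x] that by (simp add: atLeast0LessThan)
      have A'pos: "A' > 0" unfolding A'_def using Apos xpos k by (intro mult_pos_pos prod_pos) auto
      have IH: "phi (m-k) A' (sum x' {..<m-k}) \<le> A' * prod x' {..<m-k}"
      proof (rule less.IH)
        show "m - k < m" "1 \<le> m - k" "0 < A'" using k A'pos by auto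
        show "\<forall>i<m - k. 0 < x' i" using xpos unfolding x'_def by auto
        show "\<forall>i. Suc i < m - k \<longrightarrow> x' (Suc i) \<le> x' i" using desc unfolding x'_def by auto
        show "\<forall>j<m - k. A' * prod x' {..<j} \<le> sum x' {j..<m - k}"
        proof (intro allI impI)
          fix j assume j: "j < m - k"
          have "A' * prod x' {..<j} = A * prod x {..<j+k}"
            unfolding A'_def prodsh[symmetric] using prodsplit[of "j+k"] by simp
          also have "\<dots> \<le> sum x {j+k..<m}" using cons j by auto
          also have "\<dots> = sum x' {j..<m-k}" by (rule sumsh)
          finally show "A' * prod x' {..<j} \<le> sum x' {j..<m - k}" .
        qed
      qed
      have E'eq: "sum x' {..<m-k} = sum x {k..<m}" using sumsh[of 0] by (simp add: atLeast0LessThan)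
      have P'eq: "A' * prod x' {..<m-k} = A * prod x {..<m}"
        unfolding A'_def prodsh[symmetric] using prodsplit[of m] k by simp
      have A'E': "A' \<le> sum x {k..<m}" unfolding A'_def using cons k by auto
      have "phi m A E = phi (m-k) (d k) (d k)" unfolding d_def \<psi>_def
        using phi_shift[OF k(1) k(2), of A E] by simp
      also have "\<dots> \<le> phi (m-k) A' (sum x {k..<m})"
        using dpos k A'E' unfolding A'_def by (intro phi_mono) auto
      also have "\<dots> \<le> A * prod x {..<m}" using IH E'eq P'eq by simp
      finally show ?thesis unfolding E_def .
    next
      case False
      hence small: "\<forall>k. 1 \<le> k \<longrightarrow> k < m \<longrightarrow> A * prod x {..<k} < d k" by auto
      define y where "y i = (if i = 0 then E/(1+A) else if i < m - 1 then d i/(1 + d i) else d (m-1))" for i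
      have d1: "d 1 = \<psi>" unfolding d_def by simp
      have dS: "d (Suc k) = Gf (d k)" if "k \<ge> 1" for k
      proof -
        have "k = Suc (k - 1)" using that by simp
        hence "(Gf ^^ k) \<psi> = (Gf ^^ Suc (k-1)) \<psi>" by metis
        thus ?thesis unfolding d_def by simp
      qed
      have ypos: "\<forall>i<m. 0 < y i" unfolding y_def using Epos Apos dpos
        by (auto simp: add_pos_pos)
      have ysum_part: "sum y {..<j} = E/(1+A) + \<psi> - d j" if "1 \<le> j" "j \<le> m - 1" for j
        using that
      proof (induction j rule: nat_induct_at_least)
        case base
        then show ?case unfolding y_def using d1 by simp
      next
        case (Suc j)
        have e1: "sum y {..<j} = E/(1+A) + \<psi> - d j" using Suc by simp
        have e2: "y j = d j/(1 + d j)" unfolding y_def using Suc by auto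
        have e3: "d j = Gf (d j) + d j/(1 + d j)" unfolding Gf_def using dpos[of j]
          by (simp add: divide_simps power2_eq_square) (simp add: algebra_simps)
        have "sum y {..<Suc j} = sum y {..<j} + y j" by simp
        also have "\<dots> = E/(1+A) + \<psi> - Gf (d j)" using e1 e2 e3 by linarith
        finally show ?case using dS[OF Suc(1)] by simp
      qed
      have ysum: "sum y {..<m} = E"
      proof -
        have "sum y {..<m} = sum y {..<Suc (m-1)}" using m2 by simp
        also have "\<dots> = sum y {..<m-1} + y (m-1)" by simp
        also have "\<dots> = E/(1+A) + \<psi> - d (m-1) + d (m-1)"
          using ysum_part[of "m-1"] m2 unfolding y_def by simp
        also have "\<dots> = E" unfolding \<psi>_def using Apos by (simp add: divide_simps) (simp add: algebra_simps)
        finally show ?thesis .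
      qed
      have yprod_part: "prod y {..<j} = d j / A" if "1 \<le> j" "j \<le> m - 1" for j
        using that
      proof (induction j rule: nat_induct_at_least)
        case base
        then show ?case unfolding y_def using d1 Apos by (simp add: \<psi>_def)
      next
        case (Suc j)
        have "prod y {..<Suc j} = prod y {..<j} * y j" by simp
        also have "prod y {..<j} = d j / A" using Suc by simp
        also have "y j = d j/(1 + d j)" unfolding y_def using Suc by auto
        finally show ?case using dS[OF Suc(1)] unfolding Gf_def
          by (simp add: power2_eq_square)
      qed
      have yprod: "prod y {..<m} = d (m-1)^2 / A"
      proof -
        have "prod y {..<m} = prod y {..<Suc (m-1)}" using m2 by simp
        also have "\<dots> = prod y {..<m-1} * y (m-1)" by simp
        also have "\<dots> = d (m-1)/A * d (m-1)"
          using yprod_part[of "m-1"] m2 unfolding y_def by simp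
        finally show ?thesis by (simp add: power2_eq_square)
      qed
      have phiE: "phi m A E = d (m-1)^2"
        unfolding phi_def d_def using m2 \<psi>_def by (simp add: numeral_2_eq_2)
      show ?thesis
      proof (rule ccontr)
        assume "\<not> ?thesis"
        hence lt: "A * prod x {..<m} < d (m-1)^2" using phiE unfolding E_def by simp
        have "sum x {..<m} < sum y {..<m}"
        proof (rule ml_lemma)
          show "\<forall>i<m. 0 < x i" by fact
          show "\<forall>i<m. 0 < y i" by fact
          show "\<forall>i. Suc i < m \<longrightarrow> x (Suc i) \<le> x i" by fact
          show "1 \<le> m" by fact
          show "prod x {..<m} < prod y {..<m}" using lt Apos unfolding yprod
            by (simp add: divide_simps mult.commute)
          show "\<forall>k. 1 \<le> k \<longrightarrow> k < m \<longrightarrow> prod x {..<k} \<le> prod y {..<k}"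
          proof (intro allI impI)
            fix k assume k: "1 \<le> k" "k < m"
            have "A * prod x {..<k} < d k" using small k by auto
            moreover have "A * prod y {..<k} = d k" using yprod_part[of k] k Apos by simp
            ultimately have "A * prod x {..<k} \<le> A * prod y {..<k}" by simp
            thus "prod x {..<k} \<le> prod y {..<k}" using Apos by simp
          qed
        qed
        thus False using ysum unfolding E_def by simp
      qed
    qed
  qed
qed

lemma sylv_prod_pos: "sylv_prod k > 0"
  by (induction k) auto

lemma Gf_iter_half: "(Gf^^j) (1/2) = 1 / real (sylv_prod (Suc j))"
proof (induction j)
  case 0
  then show ?case by simp
next
  case (Suc j)
  define t where "t = real (sylv_prod (Suc j))"
  have tpos: "t > 0" unfolding t_def using sylv_prod_pos[of "Suc j"] by (simp only: of_nat_0_less_iff)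
  have "(Gf^^(Suc j)) (1/2) = Gf (1/t)" using Suc by (simp add: t_def)
  also have "\<dots> = 1/(t*(1+t))" unfolding Gf_def using tpos
    by (simp add: divide_simps power2_eq_square)
  also have "\<dots> = 1 / real (sylv_prod (Suc (Suc j)))"
    by (simp add: t_def algebra_simps del: sylv_prod.simps) (simp add: algebra_simps)
  finally show ?case .
qed

lemma int_prod_bound:
  fixes ks :: "nat \<Rightarrow> nat"
  assumes m2: "m \<ge> 2" and kpos: "\<forall>i<m. ks i > 0"
    and mono: "\<forall>i. Suc i < m \<longrightarrow> ks i \<le> ks (Suc i)"
    and sum1: "(\<Sum>i<m. 1 / real (ks i)) = 1"
  shows "(\<Prod>i<m. ks i) \<le> sylv_prod (m-1) ^ 2"
proof -
  define x where "x i = 1 / real (ks i)" for i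
  have xpos: "\<forall>i<m. 0 < x i" using kpos unfolding x_def by auto
  have desc: "\<forall>i. Suc i < m \<longrightarrow> x (Suc i) \<le> x i"
    using mono kpos unfolding x_def by (auto simp: frac_le)
  have prodx: "prod x {..<k} = 1 / real (prod ks {..<k})" for k
    unfolding x_def by (simp add: prod_dividef)
  have cons: "\<forall>k<m. 1 * prod x {..<k} \<le> sum x {k..<m}"
  proof (intro allI impI)
    fix k assume k: "k < m"
    define P where "P = prod ks {..<k}"
    have Ppos: "P > 0" unfolding P_def using kpos k by (intro prod_pos) auto
    define N where "N = (\<Sum>i<k. P div ks i)"
    have dv: "ks i dvd P" if "i < k" for i unfolding P_def using that
      by (intro dvd_prodI) auto
    have "real P * sum x {..<k} = (\<Sum>i<k. real P / real (ks i))"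
      unfolding x_def by (simp add: sum_distrib_left)
    also have "\<dots> = (\<Sum>i<k. real (P div ks i))"
      using dv by (intro sum.cong) (auto simp: real_of_nat_div)
    also have "\<dots> = real N" unfolding N_def by simp
    finally have PN: "real P * sum x {..<k} = real N" .
    have split: "sum x {..<m} = sum x {..<k} + sum x {k..<m}"
      using sum.atLeastLessThan_concat[of 0 k m x] k by (simp add: atLeast0LessThan)
    have tailpos: "sum x {k..<m} > 0" using xpos k by (intro sum_pos) auto
    have "sum x {k..<m} = 1 - sum x {..<k}" using split sum1 unfolding x_def by simp
    hence "real P * sum x {k..<m} = real P - real P * sum x {..<k}" by (simp add: right_diff_distrib)
    hence "real P * sum x {k..<m} = real P - real N" using PN by simp
    hence "real P - real N > 0" using tailpos Ppos by (metis mult_pos_pos of_nat_0_less_iff)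
    hence "N < P" by simp
    hence "real P - real N \<ge> 1" by linarith
    hence "real P * sum x {k..<m} \<ge> 1" using \<open>real P * sum x {k..<m} = real P - real N\<close> by simp
    hence "sum x {k..<m} \<ge> 1 / real P" using Ppos by (simp add: divide_simps mult.commute)
    thus "1 * prod x {..<k} \<le> sum x {k..<m}" unfolding prodx P_def by simp
  qed
  have "phi m 1 (sum x {..<m}) \<le> 1 * prod x {..<m}"
    using m2 xpos desc cons by (intro main_real) auto
  moreover have "sum x {..<m} = 1" using sum1 unfolding x_def by simp
  ultimately have "phi m 1 1 \<le> 1 / real (prod ks {..<m})" unfolding prodx by simp
  moreover have "phi m 1 1 = (1 / real (sylv_prod (m-1)))^2"
  proof -
    have "Suc (m-2) = m - 1" using m2 by simp
    thus ?thesis unfolding phi_def using m2 Gf_iter_half[of "m-2"] by simp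
  qed
  ultimately have "(1 / real (sylv_prod (m-1)))^2 \<le> 1 / real (prod ks {..<m})" by simp
  moreover have "real (prod ks {..<m}) > 0" using kpos by (simp only: of_nat_0_less_iff, intro prod_pos) auto
  moreover have "real (sylv_prod (m-1)) > 0" using sylv_prod_pos by simp
  ultimately have "real (prod ks {..<m}) \<le> real (sylv_prod (m-1))^2"
    by (simp add: divide_simps power2_eq_square)
  hence "real (prod ks {..<m}) \<le> real (sylv_prod (m-1)^2)" by simp
  thus ?thesis by linarith
qed

lemma sum_nth_list: "(\<Sum>i<length xs. f (xs!i)) = sum_list (map f xs)"
  by (induction xs) (simp_all add: sum.lessThan_Suc_shift del: sum.lessThan_Suc)

lemma prod_nth_list: "(\<Prod>i<length xs. f (xs!i)) = prod_list (map f xs)"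
  by (induction xs) (simp_all add: prod.lessThan_Suc_shift del: prod.lessThan_Suc)

lemma prod_bound_unsorted:
  fixes kk :: "nat \<Rightarrow> nat"
  assumes m2: "m \<ge> 2" and kpos: "\<forall>i<m. kk i > 0"
    and sum1: "(\<Sum>i<m. 1 / real (kk i)) = 1"
  shows "(\<Prod>i<m. kk i) \<le> sylv_prod (m-1) ^ 2"
proof -
  define L where "L = sort (map kk [0..<m])"
  define ks where "ks i = L ! i" for i
  have len: "length L = m" by (simp add: L_def)
  have ms: "mset L = mset (map kk [0..<m])" by (simp add: L_def)
  have srt: "sorted L" by (simp add: L_def)
  have setL: "set L = set (map kk [0..<m])" using ms by (metis set_mset_mset)
  have gsum: "(\<Sum>i<m. f (ks i)) = (\<Sum>i<m. f (kk i))" for f :: "nat \<Rightarrow> real"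
  proof -
    have "(\<Sum>i<m. f (ks i)) = sum_list (map f L)" unfolding ks_def len[symmetric] by (rule sum_nth_list)
    also have "\<dots> = sum_mset (image_mset f (mset L))" by (metis mset_map sum_mset_sum_list)
    also have "\<dots> = sum_mset (image_mset f (mset (map kk [0..<m])))" by (simp add: ms)
    also have "\<dots> = sum_list (map f (map kk [0..<m]))" by (metis mset_map sum_mset_sum_list)
    also have "\<dots> = (\<Sum>i<m. f (kk i))" using sum_nth_list[where xs="map kk [0..<m]" and f=f] by simp
    finally show ?thesis .
  qed
  have gprod: "(\<Prod>i<m. ks i) = (\<Prod>i<m. kk i)"
  proof -
    have "(\<Prod>i<m. ks i) = prod_list (map id L)" unfolding ks_def len[symmetric]
      using prod_nth_list[where xs=L and f=id] by simp
    also have "\<dots> = prod_mset (image_mset id (mset L))" by (metis mset_map prod_mset_prod_list)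
    also have "\<dots> = prod_mset (image_mset id (mset (map kk [0..<m])))" by (simp add: ms)
    also have "\<dots> = prod_list (map id (map kk [0..<m]))" by (metis mset_map prod_mset_prod_list)
    also have "\<dots> = (\<Prod>i<m. kk i)" using prod_nth_list[where xs="map kk [0..<m]" and f=id] by simp
    finally show ?thesis .
  qed
  have kspos: "\<forall>i<m. ks i > 0"
  proof (intro allI impI)
    fix i assume "i < m"
    hence "ks i \<in> set L" unfolding ks_def using len by auto
    thus "ks i > 0" using setL kpos by auto
  qed
  have mono: "\<forall>i. Suc i < m \<longrightarrow> ks i \<le> ks (Suc i)"
    unfolding ks_def using srt len by (auto intro: sorted_nth_mono)
  have "(\<Prod>i<m. ks i) \<le> sylv_prod (m-1) ^ 2"
    using m2 kspos mono gsum[of "\<lambda>k. 1 / real k"] sum1 by (intro int_prod_bound) auto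
  thus ?thesis using gprod by simp
qed

lemma prod_dvd_pow:
  fixes wt :: "nat \<Rightarrow> nat" and n h :: nat
  assumes n1: "n \<ge> 1" and pos: "\<forall>i\<in>{0..n}. wt i > 0" and dv: "\<forall>i\<in>{0..n}. wt i dvd h"
    and hsum: "h = (\<Sum>i\<in>{0..n}. wt i)" and g: "Gcd (wt ` {0..n}) = 1"
  shows "(\<Prod>i\<in>{0..n}. wt i) dvd h^(n-1)"
proof (rule multiplicity_le_imp_dvd)
  define I where "I = {0..n}"
  show "(\<Prod>i\<in>{0..n}. wt i) \<noteq> 0" using pos by auto
  fix p :: nat assume p: "prime p"
  have hpos: "h > 0" using hsum pos by (metis atLeastAtMost_iff le0 sum_pos2 finite_atLeastAtMost order_refl less_imp_le)
  have mp: "multiplicity p (\<Prod>i\<in>{0..n}. wt i) = (\<Sum>i\<in>I. multiplicity p (wt i))"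
    unfolding I_def using p pos by (intro prime_elem_multiplicity_prod_distrib) (auto simp: prime_imp_prime_elem)
  have mh: "multiplicity p (h^(n-1)) = (n-1) * multiplicity p h"
    using p hpos by (intro prime_elem_multiplicity_power_distrib) (auto simp: prime_imp_prime_elem)
  have le: "multiplicity p (wt i) \<le> multiplicity p h" if "i \<in> I" for i
    using dv hpos that unfolding I_def by (intro dvd_imp_multiplicity_le) auto
  show "multiplicity p (\<Prod>i\<in>{0..n}. wt i) \<le> multiplicity p (h^(n-1))"
  proof (cases "p dvd h")
    case False
    have "multiplicity p (wt i) = 0" if "i \<in> I" for i
    proof (rule not_dvd_imp_multiplicity_0)
      show "\<not> p dvd wt i" using False dv that unfolding I_def by (meson dvd_trans)
    qed
    hence "(\<Sum>i\<in>I. multiplicity p (wt i)) = 0" by simp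
    thus ?thesis using mp by simp
  next
    case True
    obtain i0 where i0: "i0 \<in> I" "\<not> p dvd wt i0"
    proof -
      have "\<exists>i\<in>I. \<not> p dvd wt i"
      proof (rule ccontr)
        assume "\<not> (\<exists>i\<in>I. \<not> p dvd wt i)"
        hence "p dvd Gcd (wt ` {0..n})" unfolding I_def by (intro Gcd_greatest) auto
        thus False using g p by (simp add: prime_gt_1_nat)
      qed
      thus ?thesis using that by blast
    qed
    obtain j0 where j0: "j0 \<in> I" "j0 \<noteq> i0" "\<not> p dvd wt j0"
    proof -
      have "\<exists>j\<in>I - {i0}. \<not> p dvd wt j"
      proof (rule ccontr)
        assume "\<not> (\<exists>j\<in>I - {i0}. \<not> p dvd wt j)"
        hence "p dvd (\<Sum>j\<in>I - {i0}. wt j)" by (intro dvd_sum) auto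
        moreover have "h = wt i0 + (\<Sum>j\<in>I - {i0}. wt j)"
          using hsum i0 unfolding I_def by (simp add: sum.remove)
        ultimately have "p dvd wt i0" using True by (metis dvd_add_left_iff)
        thus False using i0 by simp
      qed
      thus ?thesis using that by blast
    qed
    have cardI: "card I = n + 1" unfolding I_def by simp
    have sub: "{i0, j0} \<subseteq> I" using i0 j0 by auto
    have card2: "card (I - {i0, j0}) = n - 1"
      using card_Diff_subset[OF _ sub] cardI j0(2) by (simp add: I_def)
    have z: "multiplicity p (wt i) = 0" if "i \<in> {i0, j0}" for i
      using that i0 j0 by (auto intro: not_dvd_imp_multiplicity_0)
    have "(\<Sum>i\<in>I. multiplicity p (wt i)) = (\<Sum>i\<in>I - {i0, j0}. multiplicity p (wt i))"
      using z sub by (intro sum.mono_neutral_cong_right) (auto simp: I_def)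
    also have "\<dots> \<le> (\<Sum>i\<in>I - {i0, j0}. multiplicity p h)"
      using le by (intro sum_mono) auto
    also have "\<dots> = card (I - {i0, j0}) * multiplicity p h" by simp
    also have "\<dots> = (n-1) * multiplicity p h" using card2 by simp
    finally show ?thesis using mp mh by simp
  qed
qed

lemma weights_bound:
  fixes wt :: "nat \<Rightarrow> nat" and n :: nat
  assumes n1: "n \<ge> 1" and pos: "\<forall>i\<in>{0..n}. wt i > 0"
    and dv: "\<forall>i\<in>{0..n}. wt i dvd (\<Sum>j\<in>{0..n}. wt j)"
    and g: "Gcd (wt ` {0..n}) = 1"
  shows "(\<Sum>i\<in>{0..n}. wt i) \<le> sylv_prod n"
proof -
  define h where "h = (\<Sum>i\<in>{0..n}. wt i)"
  define kk where "kk i = h div wt i" for i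
  have idx: "{..<Suc n} = {0..n}" by auto
  have hpos: "h > 0" unfolding h_def using pos by (intro sum_pos) auto
  have dvh: "\<forall>i\<in>{0..n}. wt i dvd h" using dv unfolding h_def by simp
  have kw: "kk i * wt i = h" if "i \<in> {0..n}" for i
    unfolding kk_def using dvh that by simp
  have kpos: "\<forall>i<Suc n. kk i > 0"
  proof (intro allI impI)
    fix i assume "i < Suc n"
    hence "i \<in> {0..n}" by auto
    thus "kk i > 0" using kw[of i] hpos by (metis gr0I mult_0)
  qed
  have sum1: "(\<Sum>i<Suc n. 1 / real (kk i)) = 1"
  proof -
    have "(\<Sum>i<Suc n. 1 / real (kk i)) = (\<Sum>i\<in>{0..n}. real (wt i) / real h)"
    proof (unfold idx, rule sum.cong)
      fix i assume i: "i \<in> {0..n}"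
      have "real (kk i) * real (wt i) = real h" using kw[OF i] by (metis of_nat_mult)
      moreover have "real (wt i) > 0" using pos i by simp
      moreover have "kk i > 0" using kpos i by auto
      ultimately show "1 / real (kk i) = real (wt i) / real h" using hpos
        by (simp add: divide_simps) (simp add: mult.commute)
    qed simp
    also have "\<dots> = (\<Sum>i\<in>{0..n}. real (wt i)) / real h" by (simp add: sum_divide_distrib)
    also have "(\<Sum>i\<in>{0..n}. real (wt i)) = real h" unfolding h_def by simp
    also have "real h / real h = 1" using hpos by simp
    finally show ?thesis .
  qed
  have pk: "(\<Prod>i<Suc n. kk i) \<le> sylv_prod n ^ 2"
    using prod_bound_unsorted[of "Suc n" kk] n1 kpos sum1 by simp
  have pw: "(\<Prod>i\<in>{0..n}. wt i) dvd h^(n-1)"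
    using prod_dvd_pow[OF n1 pos] dvh g unfolding h_def by simp
  have hpow: "h^(n-1) > 0" using hpos by simp
  have pwle: "(\<Prod>i\<in>{0..n}. wt i) \<le> h^(n-1)" using pw hpow by (simp add: dvd_imp_le)
  have "(\<Prod>i\<in>{0..n}. kk i) * (\<Prod>i\<in>{0..n}. wt i) = (\<Prod>i\<in>{0..n}. h)"
    unfolding prod.distrib[symmetric] using kw by (intro prod.cong) auto
  also have "\<dots> = h^(Suc n)" by simp
  also have "\<dots> = h^2 * h^(n-1)" using n1 by (simp add: power_add[symmetric])
  finally have eq: "(\<Prod>i\<in>{0..n}. kk i) * (\<Prod>i\<in>{0..n}. wt i) = h^2 * h^(n-1)" .
  have "h^2 * h^(n-1) \<le> (\<Prod>i\<in>{0..n}. kk i) * h^(n-1)"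
    using eq pwle by (metis mult_le_mono2)
  hence "h^2 \<le> (\<Prod>i\<in>{0..n}. kk i)" using hpow hpos by simp
  also have "\<dots> \<le> sylv_prod n ^ 2" using pk idx by simp
  finally have "h^2 \<le> sylv_prod n ^ 2" .
  hence "h \<le> sylv_prod n" by (simp add: power2_nat_le_eq_le)
  thus ?thesis unfolding h_def .
qed

lemma lat_pair_sum:
  fixes u :: "int^'n" and c :: "nat \<Rightarrow> int" and v :: "nat \<Rightarrow> int^'n"
  shows "lat_pair u (\<Sum>j\<in>S. c j *s v j) = (\<Sum>j\<in>S. c j * lat_pair u (v j))"
  unfolding lat_pair_def
  by (simp add: sum_distrib_left sum_distrib_right algebra_simps sum.swap[of _ UNIV S])

theorem mainTheorem10:
  fixes \<rho> :: "nat \<Rightarrow> int^'n" and wt :: "nat \<Rightarrow> nat"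
  assumes "fake_wps_data \<rho>"
    and "are_weights \<rho> wt"
    and "fwps_gorenstein \<rho>"
    and "fwps_canonical \<rho>"
  shows "(\<Sum>i\<in>{0..CARD('n)}. wt i) \<le> sylvester CARD('n) - 1"
proof -
  define n where "n = CARD('n)"
  have n1: "n \<ge> 1" unfolding n_def by (simp add: Suc_leI card_gt_0_iff)
  have pos: "\<forall>i\<in>{0..n}. wt i > 0" and g: "Gcd (wt ` {0..n}) = 1"
    and z: "(\<Sum>i\<in>{0..n}. int (wt i) *s \<rho> i) = 0"
    using assms(2) unfolding are_weights_def n_def by auto
  define h where "h = (\<Sum>j\<in>{0..n}. wt j)"
  have dv: "\<forall>i\<in>{0..n}. wt i dvd h"
  proof
    fix i assume i: "i \<in> {0..n}"
    obtain u :: "int^'n" where u: "\<forall>j\<in>{0..n} - {i}. lat_pair u (\<rho> j) = 1"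
      using assms(3) i unfolding fwps_gorenstein_def n_def by blast
    have "0 = lat_pair u (\<Sum>j\<in>{0..n}. int (wt j) *s \<rho> j)" using z unfolding lat_pair_def by simp
    also have "\<dots> = (\<Sum>j\<in>{0..n}. int (wt j) * lat_pair u (\<rho> j))" by (rule lat_pair_sum)
    also have "\<dots> = int (wt i) * lat_pair u (\<rho> i) + (\<Sum>j\<in>{0..n} - {i}. int (wt j) * lat_pair u (\<rho> j))"
      using i by (simp add: sum.remove)
    also have "(\<Sum>j\<in>{0..n} - {i}. int (wt j) * lat_pair u (\<rho> j)) = (\<Sum>j\<in>{0..n} - {i}. int (wt j))"
      using u by (intro sum.cong) auto
    also have "\<dots> = int h - int (wt i)" unfolding h_def using i
      by (simp add: sum.remove of_nat_sum)
    finally have "int h = int (wt i) * (1 - lat_pair u (\<rho> i))" by (simp add: algebra_simps)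
    hence "int (wt i) dvd int h" by simp
    thus "wt i dvd h" by simp
  qed
  have "h \<le> sylv_prod n" unfolding h_def
    using weights_bound[OF n1 pos] dv g unfolding h_def by simp
  thus ?thesis unfolding h_def n_def sylvester_def by simp
qed

end
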